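(* On $\Omega=\mathbb R$ with $N=3$ phases, let $\delta_1=\frac1{64}$, $\delta_2=\frac5{16}$ and define the nonnegative kernels $K_{1,2}=K_{2,1}=\mathbf 1_{[-1,1]}$ and $K_{1,3}=K_{3,1}=K_{2,3}=K_{3,2}=\delta_1(\mathbf 1_{[-11,-9]}+\mathbf 1_{[9,11]})+\delta_2\mathbf 1_{[-1,1]}$. Let $\sigma_{i,j}=\frac12\int_{\mathbb R}|x|K_{i,j}(x)\,dx$ and $\mu_{i,j}=\frac{1}{2K_{i,j}(0)}$ for $i\ne j$ (so $\sigma_{1,2}=\frac12$, $\sigma_{1,3}=\sigma_{2,3}=20\delta_1+\frac{\delta_2}2$, $\mu_{1,2}=\frac12$, $\mu_{1,3}=\mu_{2,3}=\frac1{2\delta_2}$), with $\sigma_{i,i}=\mu_{i,i}^{-1}=0$. Then: (i) $\sigma$ satisfies the triangle inequality $\sigma_{i,j}+\sigma_{j,k}\ge\sigma_{i,k}$ for all $i,j,k$; (ii) both $\sigma$ and the matrix $(\mu_{i,j}^{-1})$ are conditionally negative semi-definite; (iii) for $\epsilon>0$ let $u_{1,\epsilon}=\mathbf 1_{[\epsilon,\infty)}$, $u_{2,\epsilon}=\mathbf 1_{(-\infty,-\epsilon]}$, $u_{3,\epsilon}=\mathbf 1_{[-\epsilon,\epsilon]}$; then for every $\epsilon>0$, \[ E_\epsilon(\boldsymbol u_\epsilon,\boldsymbol K):=\frac1\epsilon\sum_{(i,j)\in\mathcal I_3}\int_{\mathbb R}u_{j,\epsilon}\,(K_{i,j})_\epsilon*u_{i,\epsilon}\,dx=16\delta_1+2\delta_2=\tfrac78,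 \] while $\boldsymbol u_\epsilon\to\boldsymbol u_0=(\mathbf 1_{[0,\infty)},\mathbf 1_{(-\infty,0]},0)$ in $L^1(\mathbb R)$ and the sharp-interface energy of the limit is $E(\boldsymbol u_0,\sigma)=\sum_{(i,j)\in\mathcal I_3}\sigma_{i,j}\mathcal H^0(\partial\Sigma_i\cap\partial\Sigma_j)=2\sigma_{1,2}=1$. Consequently $\liminf_{\epsilon\to0}E_\epsilon(\boldsymbol u_\epsilon,\boldsymbol K)<E(\boldsymbol u_0,\sigma)$, so the nonlocal multiphase energies do not $\Gamma$-converge to $E(\cdot,\sigma)$. Moreover, the reciprocal mobilities do not satisfy the triangle inequality ($\mu_{1,2}^{-1}>\mu_{1,3}^{-1}+\mu_{3,2}^{-1}$).
   Context: $\mathcal I_3=\{(i,j)\in\{1,2,3\}^2:i\ne j\}$; $K_\epsilon(x)=\epsilon^{-1}K(x/\epsilon)$. A symmetric matrix $A$ is conditionally negative semi-definite if $\sum_{i,j}A_{i,j}\xi_i\xi_j\le0$ whenever $\sum_i\xi_i=0$. For $\boldsymbol u_0$, $\Sigma_1=[0,\infty)$, $\Sigma_2=(-\infty,0]$, $\Sigma_3=\emptyset$. *)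

theory Defs
  imports "HOL-Analysis.Analysis"
begin

definition phases :: "nat set" where
  "phases = {1, 2, 3}"

definition I3 :: "(nat \<times> nat) set" where
  "I3 = {(i, j). i \<in> phases \<and> j \<in> phases \<and> i \<noteq> j}"

definition delta1 :: real where "delta1 = 1 / 64"
definition delta2 :: real where "delta2 = 5 / 16"

definition Kern :: "nat \<Rightarrow> nat \<Rightarrow> real \<Rightarrow> real" where
  "Kern i j x =
     (if {i, j} = {1, 2} then indicator {-1..1} x
      else if {i, j} = {1, 3} \<or> {i, j} = {2, 3} then
        delta1 * (indicator {-11..-9} x + indicator {9..11} x) + delta2 * indicator {-1..1} x
      else 0)"

definition rescale :: "real \<Rightarrow> (real \<Rightarrow> real) \<Rightarrow> real \<Rightarrow> real" where
  "rescale \<epsilon> K x = K (x / \<epsilon>) / \<epsilon>"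

definition conv :: "(real \<Rightarrow> real) \<Rightarrow> (real \<Rightarrow> real) \<Rightarrow> real \<Rightarrow> real" where
  "conv f g x = (LINT y|lborel. f (x - y) * g y)"

definition sigma :: "nat \<Rightarrow> nat \<Rightarrow> real" where
  "sigma i j = (if i = j then 0 else (1/2) * (LINT x|lborel. \<bar>x\<bar> * Kern i j x))"

definition mu :: "nat \<Rightarrow> nat \<Rightarrow> real" where
  "mu i j = 1 / (2 * Kern i j 0)"

definition mu_inv :: "nat \<Rightarrow> nat \<Rightarrow> real" where
  "mu_inv i j = (if i = j then 0 else 1 / mu i j)"

definition cond_neg_semidef :: "(nat \<Rightarrow> nat \<Rightarrow> real) \<Rightarrow> bool" where
  "cond_neg_semidef A \<longleftrightarrow>
     (\<forall>\<xi> :: nat \<Rightarrow> real. (\<Sum>i\<in>phases. \<xi> i) = 0 \<longrightarrow>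
        (\<Sum>i\<in>phases. \<Sum>j\<in>phases. A i j * \<xi> i * \<xi> j) \<le> 0)"

definition u_eps :: "real \<Rightarrow> nat \<Rightarrow> real \<Rightarrow> real" where
  "u_eps \<epsilon> i x =
     (if i = 1 then indicator {\<epsilon>..} x
      else if i = 2 then indicator {..-\<epsilon>} x
      else if i = 3 then indicator {-\<epsilon>..\<epsilon>} x else 0)"

definition u0 :: "nat \<Rightarrow> real \<Rightarrow> real" where
  "u0 i x = (if i = 1 then indicator {0..} x else if i = 2 then indicator {..0} x else 0)"

definition E_nonlocal :: "real \<Rightarrow> (nat \<Rightarrow> real \<Rightarrow> real) \<Rightarrow> real" where
  "E_nonlocal \<epsilon> u =
     (1 / \<epsilon>) * (\<Sum>(i, j)\<in>I3. LINT x|lborel. u j x * conv (rescale \<epsilon> (Kern i j)) (u i) x)"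

definition Sigma_ph :: "(nat \<Rightarrow> real \<Rightarrow> real) \<Rightarrow> nat \<Rightarrow> real set" where
  "Sigma_ph u i = {x. u i x = 1}"

text \<open>H^0 = counting measure; rendered with card (the sets involved are finite).\<close>
definition E_sharp :: "(nat \<Rightarrow> real \<Rightarrow> real) \<Rightarrow> (nat \<Rightarrow> nat \<Rightarrow> real) \<Rightarrow> real" where
  "E_sharp u s =
     (\<Sum>(i, j)\<in>I3. s i j * real (card (frontier (Sigma_ph u i) \<inter> frontier (Sigma_ph u j))))"

end

theory Submission
  imports Defs
begin

lemma ind_int: "(LINT y|lborel. indicator {p..q} y) = max 0 (q - p)" for p q :: real
  by (cases "p \<le> q") auto

lemma ind_integrable: "integrable lborel (indicator {p..q} :: real \<Rightarrow> real)" for p q :: real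
  by (simp add: integrable_indicator_iff emeasure_lborel_Icc_eq)

lemma piece:
  fixes a b p q :: real assumes "a \<le> b"
  shows "(LINT x|lborel. indicator {a..b} x * (p * x + q)) = p * (b^2 - a^2) / 2 + q * (b - a)"
proof -
  have "(LINT x|lborel. indicator {a..b} x *\<^sub>R (p * x + q)) = (p*b^2/2 + q*b) - (p*a^2/2 + q*a)"
    apply (rule integral_FTC_atLeastAtMost[where F="\<lambda>x. p*x^2/2 + q*x"])
    using assms apply simp
    apply (simp add: has_real_derivative_iff_has_vector_derivative[symmetric])
    apply (auto intro!: derivative_eq_intros continuous_intros)
    done
  moreover have "(p*b^2/2 + q*b) - (p*a^2/2 + q*a) = p * (b^2 - a^2) / 2 + q * (b - a)"
    by (simp add: field_simps)
  ultimately show ?thesis by simp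
qed

lemma piece_int:
  fixes a b p q :: real
  shows "integrable lborel (\<lambda>x. indicator {a..b} x * (p * x + q))"
  using borel_integrable_atLeastAtMost[of a b "\<lambda>x. p*x+q"] by (simp add: mult.commute)

lemma piece_oc:
  fixes a b p q :: real assumes "a \<le> b"
  shows "(LINT x|lborel. indicator {a<..b} x * (p * x + q)) = p * (b^2 - a^2) / 2 + q * (b - a)"
proof -
  have "(LINT x|lborel. indicator {a<..b} x * (p * x + q)) = (LINT x|lborel. indicator {a..b} x * (p * x + q))"
    by (rule integral_cong_AE) (auto intro!: eventually_mono[OF AE_lborel_singleton[of a]] split: split_indicator)
  then show ?thesis using piece[OF assms] by simp
qed

lemma piece_oc_int:
  fixes a b p q :: real
  shows "integrable lborel (\<lambda>x. indicator {a<..b} x * (p * x + q))"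
proof (rule integrable_cong_AE_imp[OF piece_int[of a b p q]])
  show "AE x in lborel. indicator {a..b} x * (p * x + q) = indicator {a<..b} x * (p * x + q)"
    by (auto intro!: eventually_mono[OF AE_lborel_singleton[of a]] split: split_indicator)
  show "(\<lambda>x. indicator {a<..b} x * (p * x + q)) \<in> borel_measurable lborel"
    by measurable
qed

lemma shift_ind:
  fixes e a b x y :: real assumes "e > 0"
  shows "indicator {a..b} ((x - y) / e) = (indicator {x - b*e .. x - a*e} y :: real)"
  using assms by (auto split: split_indicator simp: field_simps)

definition Kg :: "real \<Rightarrow> real \<Rightarrow> real \<Rightarrow> real" where
  "Kg d1 d2 z = d1 * (indicator {-11..-9} z + indicator {9..11} z) + d2 * indicator {-1..1} z"

lemma Kern_12: "Kern 1 2 = Kg 0 1" "Kern 2 1 = Kg 0 1"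
  by (auto simp: Kern_def Kg_def doubleton_eq_iff)
lemma Kern_13: "Kern 1 3 = Kg delta1 delta2" "Kern 3 1 = Kg delta1 delta2"
   "Kern 2 3 = Kg delta1 delta2" "Kern 3 2 = Kg delta1 delta2"
  by (auto simp: Kern_def Kg_def doubleton_eq_iff)

lemma conv_gen:
  fixes e x d1 d2 :: real and S :: "real set"
  assumes e: "e > 0" and hS: "\<And>p q y. indicator {p..q} y * indicator S y = (indicator {L p q..R p q} y :: real)"
  shows "conv (rescale e (Kg d1 d2)) (indicator S) x =
    (d1 * (max 0 (R (x+9*e) (x+11*e) - L (x+9*e) (x+11*e)) + max 0 (R (x-11*e) (x-9*e) - L (x-11*e) (x-9*e)))
     + d2 * max 0 (R (x-e) (x+e) - L (x-e) (x+e))) / e"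
proof -
  have s1: "indicator {-11..-9} ((x - y) / e) = (indicator {x+9*e..x+11*e} y :: real)" for y
    using shift_ind[OF e, of "-11" "-9" x y] by simp
  have s2: "indicator {9..11} ((x - y) / e) = (indicator {x-11*e..x-9*e} y :: real)" for y
    using shift_ind[OF e, of "9" "11" x y] by simp
  have s3: "indicator {-1..1} ((x - y) / e) = (indicator {x-e..x+e} y :: real)" for y
    using shift_ind[OF e, of "-1" "1" x y] by simp
  have pt: "rescale e (Kg d1 d2) (x - y) * indicator S y =
      (d1/e) * indicator {L (x+9*e) (x+11*e)..R (x+9*e) (x+11*e)} y
    + (d1/e) * indicator {L (x-11*e) (x-9*e)..R (x-11*e) (x-9*e)} y
    + (d2/e) * indicator {L (x-e) (x+e)..R (x-e) (x+e)} y" for y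
    unfolding rescale_def Kg_def s1 s2 s3 hS[symmetric]
    by (simp add: algebra_simps add_divide_distrib)
  show ?thesis
    unfolding conv_def pt
    by (simp add: ind_integrable ind_int add_divide_distrib ring_distribs del: integral_indicator)
qed

lemma conv_S1:
  fixes e x d1 d2 :: real assumes e: "e > 0"
  shows "conv (rescale e (Kg d1 d2)) (indicator {e..}) x =
    (d1 * (max 0 ((x+11*e) - max (x+9*e) e) + max 0 ((x-9*e) - max (x-11*e) e))
     + d2 * max 0 ((x+e) - max (x-e) e)) / e"
proof -
  have hS: "\<And>p q y. indicator {p..q} y * indicator {e..} y = (indicator {max p e..q} y :: real)"
    by (auto split: split_indicator)
  show ?thesis by (rule conv_gen[OF e hS])
qed

lemma conv_S2:
  fixes e x d1 d2 :: real assumes e: "e > 0"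
  shows "conv (rescale e (Kg d1 d2)) (indicator {..-e}) x =
    (d1 * (max 0 (min (x+11*e) (-e) - (x+9*e)) + max 0 (min (x-9*e) (-e) - (x-11*e)))
     + d2 * max 0 (min (x+e) (-e) - (x-e))) / e"
proof -
  have hS: "\<And>p q y. indicator {p..q} y * indicator {..-e} y = (indicator {p..min q (-e)} y :: real)"
    by (auto split: split_indicator)
  show ?thesis by (rule conv_gen[OF e hS])
qed

lemma conv_S3:
  fixes e x d1 d2 :: real assumes e: "e > 0"
  shows "conv (rescale e (Kg d1 d2)) (indicator {-e..e}) x =
    (d1 * (max 0 (min (x+11*e) e - max (x+9*e) (-e)) + max 0 (min (x-9*e) e - max (x-11*e) (-e)))
     + d2 * max 0 (min (x+e) e - max (x-e) (-e))) / e"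
proof -
  have hS: "\<And>p q y. indicator {p..q} y * indicator {-e..e} y = (indicator {max p (-e)..min q e} y :: real)"
    by (auto simp: indicator_def)
  show ?thesis
    using conv_gen[OF e, of "{-e..e}" "\<lambda>p q. max p (-e)" "\<lambda>p q. min q e", OF hS] by simp
qed

lemma T13:
  fixes e d1 d2 :: real assumes e: "e > 0"
  shows "(LINT x|lborel. indicator {-e..e} x * conv (rescale e (Kg d1 d2)) (indicator {e..}) x) = 4*d1*e + d2*e/2"
proof -
  have pw: "indicator {-e..e} x * conv (rescale e (Kg d1 d2)) (indicator {e..}) x =
     indicator {-e..e} x * (0 * x + 2*d1) + indicator {0..e} x * ((d2/e) * x + 0)" for x
    unfolding conv_S1[OF e] using e by (auto split: split_indicator simp: max_def field_simps)
  have l1: "-e \<le> e" using e by simp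
  have l2: "0 \<le> e" using e by simp
  have "(LINT x|lborel. indicator {-e..e} x * conv (rescale e (Kg d1 d2)) (indicator {e..}) x)
     = (LINT x|lborel. indicator {-e..e} x * (0 * x + 2*d1) + indicator {0..e} x * ((d2/e) * x + 0))"
    by (simp only: pw)
  also have "\<dots> = (LINT x|lborel. indicator {-e..e} x * (0 * x + 2*d1)) + (LINT x|lborel. indicator {0..e} x * ((d2/e) * x + 0))"
    by (rule Bochner_Integration.integral_add[OF piece_int piece_int])
  also have "\<dots> = 4*d1*e + d2*e/2"
    using e by (simp only: piece[OF l1] piece[OF l2]) (simp add: field_simps power2_eq_square)
  finally show ?thesis .
qed

lemma T23:
  fixes e d1 d2 :: real assumes e: "e > 0"
  shows "(LINT x|lborel. indicator {-e..e} x * conv (rescale e (Kg d1 d2)) (indicator {..-e}) x) = 4*d1*e + d2*e/2"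
proof -
  have pw: "indicator {-e..e} x * conv (rescale e (Kg d1 d2)) (indicator {..-e}) x =
     indicator {-e..e} x * (0 * x + 2*d1) + indicator {-e..0} x * ((-d2/e) * x + 0)" for x
    unfolding conv_S2[OF e] using e by (auto split: split_indicator simp: max_def min_def field_simps)
  have l1: "-e \<le> e" using e by simp
  have l2: "-e \<le> 0" using e by simp
  have "(LINT x|lborel. indicator {-e..e} x * conv (rescale e (Kg d1 d2)) (indicator {..-e}) x)
     = (LINT x|lborel. indicator {-e..e} x * (0 * x + 2*d1) + indicator {-e..0} x * ((-d2/e) * x + 0))"
    by (simp only: pw)
  also have "\<dots> = (LINT x|lborel. indicator {-e..e} x * (0 * x + 2*d1)) + (LINT x|lborel. indicator {-e..0} x * ((-d2/e) * x + 0))"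
    by (rule Bochner_Integration.integral_add[OF piece_int piece_int])
  also have "\<dots> = 4*d1*e + d2*e/2"
    using e by (simp only: piece[OF l1] piece[OF l2]) (simp add: field_simps power2_eq_square)
  finally show ?thesis .
qed

lemma T31:
  fixes e d1 d2 :: real assumes e: "e > 0"
  shows "(LINT x|lborel. indicator {e..} x * conv (rescale e (Kg d1 d2)) (indicator {-e..e}) x) = 4*d1*e + d2*e/2"
proof -
  have pw: "indicator {e..} x * conv (rescale e (Kg d1 d2)) (indicator {-e..e}) x =
     indicator {8*e..10*e} x * ((d1/e) * x + (-8*d1)) + indicator {10*e<..12*e} x * ((-d1/e) * x + 12*d1)
     + indicator {e..2*e} x * ((-d2/e) * x + 2*d2)" for x
    unfolding conv_S3[OF e] using e by (auto split: split_indicator simp: max_def min_def field_simps)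
  have l1: "8*e \<le> 10*e" using e by simp
  have l2: "10*e \<le> 12*e" using e by simp
  have l3: "e \<le> 2*e" using e by simp
  have "(LINT x|lborel. indicator {e..} x * conv (rescale e (Kg d1 d2)) (indicator {-e..e}) x)
     = (LINT x|lborel. indicator {8*e..10*e} x * ((d1/e) * x + (-8*d1)) + indicator {10*e<..12*e} x * ((-d1/e) * x + 12*d1)
     + indicator {e..2*e} x * ((-d2/e) * x + 2*d2))"
    by (simp only: pw)
  also have "\<dots> = (LINT x|lborel. indicator {8*e..10*e} x * ((d1/e) * x + (-8*d1))) + (LINT x|lborel. indicator {10*e<..12*e} x * ((-d1/e) * x + 12*d1))
     + (LINT x|lborel. indicator {e..2*e} x * ((-d2/e) * x + 2*d2))"
    by (simp only: Bochner_Integration.integral_add[OF Bochner_Integration.integrable_add[OF piece_int piece_oc_int] piece_int]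
         Bochner_Integration.integral_add[OF piece_int piece_oc_int])
  also have "\<dots> = 4*d1*e + d2*e/2"
    using e by (simp only: piece[OF l1] piece_oc[OF l2] piece[OF l3]) (simp add: field_simps power2_eq_square)
  finally show ?thesis .
qed

lemma T32:
  fixes e d1 d2 :: real assumes e: "e > 0"
  shows "(LINT x|lborel. indicator {..-e} x * conv (rescale e (Kg d1 d2)) (indicator {-e..e}) x) = 4*d1*e + d2*e/2"
proof -
  have pw: "indicator {..-e} x * conv (rescale e (Kg d1 d2)) (indicator {-e..e}) x =
     indicator {-12*e..-10*e} x * ((d1/e) * x + 12*d1) + indicator {-10*e<..-8*e} x * ((-d1/e) * x + (-8*d1))
     + indicator {-2*e..-e} x * ((d2/e) * x + 2*d2)" for x
    unfolding conv_S3[OF e] using e by (auto split: split_indicator simp: max_def min_def field_simps)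
  have l1: "-12*e \<le> -10*e" using e by simp
  have l2: "-10*e \<le> -8*e" using e by simp
  have l3: "-2*e \<le> -e" using e by simp
  have "(LINT x|lborel. indicator {..-e} x * conv (rescale e (Kg d1 d2)) (indicator {-e..e}) x)
     = (LINT x|lborel. indicator {-12*e..-10*e} x * ((d1/e) * x + 12*d1) + indicator {-10*e<..-8*e} x * ((-d1/e) * x + (-8*d1))
     + indicator {-2*e..-e} x * ((d2/e) * x + 2*d2))"
    by (simp only: pw)
  also have "\<dots> = (LINT x|lborel. indicator {-12*e..-10*e} x * ((d1/e) * x + 12*d1)) + (LINT x|lborel. indicator {-10*e<..-8*e} x * ((-d1/e) * x + (-8*d1)))
     + (LINT x|lborel. indicator {-2*e..-e} x * ((d2/e) * x + 2*d2))"
    by (simp only: Bochner_Integration.integral_add[OF Bochner_Integration.integrable_add[OF piece_int piece_oc_int] piece_int]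
         Bochner_Integration.integral_add[OF piece_int piece_oc_int])
  also have "\<dots> = 4*d1*e + d2*e/2"
    using e by (simp only: piece[OF l1] piece_oc[OF l2] piece[OF l3]) (simp add: field_simps power2_eq_square)
  finally show ?thesis .
qed

lemma T12:
  fixes e :: real assumes e: "e > 0"
  shows "(LINT x|lborel. indicator {..-e} x * conv (rescale e (Kg 0 1)) (indicator {e..}) x) = 0"
proof -
  have pw: "indicator {..-e} x * conv (rescale e (Kg 0 1)) (indicator {e..}) x = 0" for x
    unfolding conv_S1[OF e] using e by (auto split: split_indicator simp: max_def)
  show ?thesis by (simp only: pw Bochner_Integration.integral_zero)
qed

lemma T21:
  fixes e :: real assumes e: "e > 0"
  shows "(LINT x|lborel. indicator {e..} x * conv (rescale e (Kg 0 1)) (indicator {..-e}) x) = 0"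
proof -
  have pw: "indicator {e..} x * conv (rescale e (Kg 0 1)) (indicator {..-e}) x = 0" for x
    unfolding conv_S2[OF e] using e by (auto split: split_indicator simp: max_def min_def)
  show ?thesis by (simp only: pw Bochner_Integration.integral_zero)
qed

lemma abs_Kg_int: "(LINT x|lborel. \<bar>x\<bar> * Kg d1 d2 x) = 40*d1 + d2"
proof -
  have pw: "\<bar>x\<bar> * Kg d1 d2 x = indicator {-11..-9} x * ((-d1) * x + 0) + indicator {9..11} x * (d1 * x + 0)
     + indicator {-1..0} x * ((-d2) * x + 0) + indicator {0<..1} x * (d2 * x + 0)" for x :: real
    by (auto simp: Kg_def split: split_indicator)
  have l1: "(-11::real) \<le> -9" "(9::real) \<le> 11" "(-1::real) \<le> 0" "(0::real) \<le> 1" by simp_all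
  have "(LINT x|lborel. \<bar>x\<bar> * Kg d1 d2 x) = (LINT x|lborel. indicator {-11..-9} x * ((-d1) * x + 0) + indicator {9..11} x * (d1 * x + 0)
     + indicator {-1..0} x * ((-d2) * x + 0) + indicator {0<..1} x * (d2 * x + 0))"
    by (simp only: pw)
  also have "\<dots> = (LINT x|lborel. indicator {-11..-9} x * ((-d1) * x + 0)) + (LINT x|lborel. indicator {9..11} x * (d1 * x + 0))
     + (LINT x|lborel. indicator {-1..0} x * ((-d2) * x + 0)) + (LINT x|lborel. indicator {0<..1} x * (d2 * x + 0))"
    by (simp only: Bochner_Integration.integral_add Bochner_Integration.integrable_add piece_int piece_oc_int)
  also have "\<dots> = 40*d1 + d2"
    by (simp only: piece[OF l1(1)] piece[OF l1(2)] piece[OF l1(3)] piece_oc[OF l1(4)]) (simp add: field_simps power2_eq_square)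
  finally show ?thesis .
qed

lemma sigma_vals:
  "sigma 1 2 = 1/2" "sigma 2 1 = 1/2" "sigma 1 3 = 20*delta1 + delta2/2" "sigma 3 1 = 20*delta1 + delta2/2"
  "sigma 2 3 = 20*delta1 + delta2/2" "sigma 3 2 = 20*delta1 + delta2/2"
  "sigma 1 1 = 0" "sigma 2 2 = 0" "sigma 3 3 = 0"
  unfolding sigma_def Kern_12 Kern_13 by (simp_all add: abs_Kg_int)

lemma Kern0: "Kern 1 2 0 = 1" "Kern 1 3 0 = delta2" "Kern 2 3 0 = delta2" "Kern 3 2 0 = delta2"
  unfolding Kern_12 Kern_13 by (simp_all add: Kg_def)

lemma mu_vals: "mu 1 2 = 1/2" "mu 1 3 = 1/(2*delta2)" "mu 2 3 = 1/(2*delta2)"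
  unfolding mu_def Kern0 by simp_all

lemma mu_inv_vals:
  "mu_inv 1 2 = 2" "mu_inv 2 1 = 2" "mu_inv 1 3 = 2*delta2" "mu_inv 3 1 = 2*delta2"
  "mu_inv 2 3 = 2*delta2" "mu_inv 3 2 = 2*delta2"
  "mu_inv 1 1 = 0" "mu_inv 2 2 = 0" "mu_inv 3 3 = 0"
  unfolding mu_inv_def mu_def Kern_12 Kern_13 by (simp_all add: Kg_def delta2_def)

lemma sum_phases: "(\<Sum>i\<in>phases. f i) = f 1 + f 2 + (f 3 :: real)"
  by (simp add: phases_def)

lemma I3_eq: "I3 = {(1,2),(1,3),(2,1),(2,3),(3,1),(3,2)}"
  by (auto simp: I3_def phases_def)

lemma sum_I3: "(\<Sum>(i,j)\<in>I3. f i j) = f 1 2 + f 1 3 + f 2 1 + f 2 3 + f 3 1 + (f 3 2 :: real)"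
  unfolding I3_eq by simp

lemma cnsd3:
  fixes A :: "nat \<Rightarrow> nat \<Rightarrow> real"
  assumes "A 1 1 = 0" "A 2 2 = 0" "A 3 3 = 0" "A 1 2 = a" "A 2 1 = a"
    "A 1 3 = b" "A 3 1 = b" "A 2 3 = b" "A 3 2 = b" "0 \<le> a" "a \<le> 4*b"
  shows "cond_neg_semidef A"
  unfolding cond_neg_semidef_def
proof (intro allI impI)
  fix \<xi> :: "nat \<Rightarrow> real"
  assume "(\<Sum>i\<in>phases. \<xi> i) = 0"
  then have z: "\<xi> 3 = - \<xi> 1 - \<xi> 2" by (simp add: phases_def)
  define x where "x = \<xi> 1"
  define y where "y = \<xi> 2"
  have S: "(\<Sum>i\<in>phases. \<Sum>j\<in>phases. A i j * \<xi> i * \<xi> j) = 2*a*x*y - 2*b*(x+y)^2"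
    unfolding sum_phases assms z x_def y_def by (simp add: algebra_simps power2_eq_square)
  have "(a/4)*(x+y)^2 \<le> b*(x+y)^2" by (rule mult_right_mono) (use assms in simp_all)
  moreover have "2*a*x*y - (a/2)*(x+y)^2 = -(a/2)*(x-y)^2" by (simp add: algebra_simps power2_eq_square)
  moreover have "(a/2)*(x-y)^2 \<ge> 0" using assms by simp
  ultimately show "(\<Sum>i\<in>phases. \<Sum>j\<in>phases. A i j * \<xi> i * \<xi> j) \<le> 0"
    unfolding S by linarith
qed

lemma u_eps_fun: "u_eps e 1 = indicator {e..}" "u_eps e 2 = indicator {..-e}" "u_eps e 3 = indicator {-e..e}"
  by (auto simp: u_eps_def)


lemma E_val:
  fixes e :: real assumes e: "e > 0"
  shows "E_nonlocal e (u_eps e) = 16 * delta1 + 2 * delta2"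
proof -
  have "E_nonlocal e (u_eps e) = (1/e) * (0 + (4*delta1*e + delta2*e/2) + 0 + (4*delta1*e + delta2*e/2)
        + (4*delta1*e + delta2*e/2) + (4*delta1*e + delta2*e/2))"
    unfolding E_nonlocal_def sum_I3 u_eps_fun Kern_12 Kern_13 T12[OF e] T21[OF e] T13[OF e] T23[OF e] T31[OF e] T32[OF e]
    by simp
  also have "\<dots> = 16 * delta1 + 2 * delta2" using e by (simp add: field_simps)
  finally show ?thesis .
qed

lemma L1_conv:
  assumes "i \<in> phases"
  shows "((\<lambda>\<epsilon>. LINT x|lborel. \<bar>u_eps \<epsilon> i x - u0 i x\<bar>) \<longlongrightarrow> 0) (at_right 0)"
proof -
  have c: "((\<lambda>\<epsilon>::real. c * \<epsilon>) \<longlongrightarrow> 0) (at_right 0)" for c :: real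
    by (rule tendsto_eq_intros | simp)+
  have ev: "\<forall>\<^sub>F \<epsilon> in at_right (0::real). 0 < \<epsilon>" by (rule eventually_at_right_less)
  have "i = 1 \<or> i = 2 \<or> i = 3" using assms by (auto simp: phases_def)
  then show ?thesis
  proof (elim disjE)
    assume i: "i = 1"
    have "0 < e \<Longrightarrow> (LINT x|lborel. \<bar>u_eps e i x - u0 i x\<bar>) = 1 * e" for e :: real
    proof -
      assume e: "0 < e"
      have "\<bar>u_eps e i x - u0 i x\<bar> = indicator {0..<e} x" for x
        using e by (auto simp: i u_eps_def u0_def split: split_indicator)
      then show ?thesis using e by simp
    qed
    then have "\<forall>\<^sub>F e in at_right 0. 1 * e = (LINT x|lborel. \<bar>u_eps e i x - u0 i x\<bar>)"
      by (auto intro: eventually_mono[OF ev])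
    then show ?thesis by (rule Lim_transform_eventually[OF c])
  next
    assume i: "i = 2"
    have "0 < e \<Longrightarrow> (LINT x|lborel. \<bar>u_eps e i x - u0 i x\<bar>) = 1 * e" for e :: real
    proof -
      assume e: "0 < e"
      have "\<bar>u_eps e i x - u0 i x\<bar> = indicator {-e<..0} x" for x
        using e by (auto simp: i u_eps_def u0_def split: split_indicator)
      then show ?thesis using e by simp
    qed
    then have "\<forall>\<^sub>F e in at_right 0. 1 * e = (LINT x|lborel. \<bar>u_eps e i x - u0 i x\<bar>)"
      by (auto intro: eventually_mono[OF ev])
    then show ?thesis by (rule Lim_transform_eventually[OF c])
  next
    assume i: "i = 3"
    have "0 < e \<Longrightarrow> (LINT x|lborel. \<bar>u_eps e i x - u0 i x\<bar>) = 2 * e" for e :: real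
    proof -
      assume e: "0 < e"
      have "\<bar>u_eps e i x - u0 i x\<bar> = indicator {-e..e} x" for x
        using e by (auto simp: i u_eps_def u0_def split: split_indicator)
      then show ?thesis using e by simp
    qed
    then have "\<forall>\<^sub>F e in at_right 0. 2 * e = (LINT x|lborel. \<bar>u_eps e i x - u0 i x\<bar>)"
      by (auto intro: eventually_mono[OF ev])
    then show ?thesis by (rule Lim_transform_eventually[OF c])
  qed
qed

lemma Sharp_val: "E_sharp u0 sigma = 2 * sigma 1 2"
proof -
  have a: "Sigma_ph u0 1 = {0..}" "Sigma_ph u0 2 = {..0}" "Sigma_ph u0 3 = {}"
    by (auto simp: Sigma_ph_def u0_def split: split_indicator)
  show ?thesis
    unfolding E_sharp_def sum_I3 a sigma_vals by simp
qed

theorem mainTheorem6: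
  shows "sigma 1 2 = 1/2 \<and> sigma 1 3 = 20 * delta1 + delta2 / 2 \<and> sigma 2 3 = 20 * delta1 + delta2 / 2
    \<and> mu 1 2 = 1/2 \<and> mu 1 3 = 1 / (2 * delta2) \<and> mu 2 3 = 1 / (2 * delta2)
    \<and> (\<forall>i\<in>phases. \<forall>j\<in>phases. \<forall>k\<in>phases. sigma i j + sigma j k \<ge> sigma i k)
    \<and> cond_neg_semidef sigma \<and> cond_neg_semidef mu_inv
    \<and> (\<forall>\<epsilon>>0. E_nonlocal \<epsilon> (u_eps \<epsilon>) = 16 * delta1 + 2 * delta2)
    \<and> 16 * delta1 + 2 * delta2 = 7/8
    \<and> (\<forall>i\<in>phases. ((\<lambda>\<epsilon>. LINT x|lborel. \<bar>u_eps \<epsilon> i x - u0 i x\<bar>) \<longlongrightarrow> 0) (at_right 0))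
    \<and> E_sharp u0 sigma = 2 * sigma 1 2 \<and> 2 * sigma 1 2 = 1
    \<and> Liminf (at_right 0) (\<lambda>\<epsilon>. ereal (E_nonlocal \<epsilon> (u_eps \<epsilon>))) < ereal (E_sharp u0 sigma)
    \<and> mu_inv 1 2 > mu_inv 1 3 + mu_inv 3 2"
proof -
  have d: "delta1 = 1/64" "delta2 = 5/16" by (simp_all add: delta1_def delta2_def)
  note sv = sigma_vals sigma_vals[unfolded One_nat_def]
  have tri: "\<forall>i\<in>phases. \<forall>j\<in>phases. \<forall>k\<in>phases. sigma i j + sigma j k \<ge> sigma i k"
    unfolding phases_def by (auto simp: sv d)
  have c1: "cond_neg_semidef sigma"
    by (rule cnsd3[where a="1/2" and b="20*delta1 + delta2/2"]) (simp_all only: sigma_vals, simp_all add: d)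
  have c2: "cond_neg_semidef mu_inv"
    by (rule cnsd3[where a="2" and b="2*delta2"]) (simp_all only: mu_inv_vals, simp_all add: d)
  have E: "\<forall>\<epsilon>>0. E_nonlocal \<epsilon> (u_eps \<epsilon>) = 16 * delta1 + 2 * delta2"
    using E_val by blast
  have n78: "16 * delta1 + 2 * delta2 = 7/8" by (simp add: d)
  have L1: "\<forall>i\<in>phases. ((\<lambda>\<epsilon>. LINT x|lborel. \<bar>u_eps \<epsilon> i x - u0 i x\<bar>) \<longlongrightarrow> 0) (at_right 0)"
    using L1_conv by blast
  have sh: "E_sharp u0 sigma = 1" using Sharp_val sigma_vals by simp
  have ev: "\<forall>\<^sub>F \<epsilon> in at_right (0::real). ereal (E_nonlocal \<epsilon> (u_eps \<epsilon>)) = ereal (7/8)"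
    by (rule eventually_mono[OF eventually_at_right_less]) (simp add: E_val n78)
  have li: "Liminf (at_right 0) (\<lambda>\<epsilon>. ereal (E_nonlocal \<epsilon> (u_eps \<epsilon>))) = ereal (7/8)"
    unfolding Liminf_eq[OF ev] by (rule Liminf_const) simp
  show ?thesis
    using tri c1 c2 E n78 L1 sh li Sharp_val
    by (simp add: sv mu_vals mu_inv_vals mu_vals[unfolded One_nat_def] mu_inv_vals[unfolded One_nat_def] d)
qed

end
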